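(* Let $M_1,M_2\in\mathbb{S}^n$ and let $$\mathcal{T}(\{M_1,M_2\})=\{X\in\mathbb{S}^n_+:\ \langle M_1,X\rangle=0,\ \langle M_2,X\rangle=0\}.$$ If $\mathcal{T}(\{M_1,M_2\})$ is rank-one generated, then one of the following holds: (i) there exists $(\alpha_1,\alpha_2)\neq(0,0)$ such that $\alpha_1M_1+\alpha_2M_2\in\mathbb{S}^n_+$, or (ii) there exist $a,b,c\in\mathbb{R}^n$ such that $M_1=\mathrm{Sym}(ac^\top)$ and $M_2=\mathrm{Sym}(bc^\top)$.
   Context: $\mathbb{S}^n$ is the space of real symmetric $n\times n$ matrices with inner product $\langle A,B\rangle=\mathrm{tr}(AB)$, and $\mathbb{S}^n_+$ the cone of positive semidefinite matrices. For $M\in\mathbb{R}^{n\times n}$, $\mathrm{Sym}(M)=(M+M^\top)/2$. A closed convex cone $\mathcal{S}\subseteq\mathbb{S}^n_+$ is called rank-one generated (ROG) if $\mathcal{S}=\mathrm{conv}(\mathcal{S}\cap\{xx^\top: x\in\mathbb{R}^n\})$. *)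

theory Defs
  imports "HOL-Analysis.Analysis"
begin

definition sym_mat :: "real^'n^'n \<Rightarrow> bool" where
  "sym_mat A \<longleftrightarrow> transpose A = A"

definition psd :: "real^'n^'n \<Rightarrow> bool" where
  "psd A \<longleftrightarrow> sym_mat A \<and> (\<forall>x. 0 \<le> x \<bullet> (A *v x))"

definition frob :: "real^'n^'n \<Rightarrow> real^'n^'n \<Rightarrow> real" where
  "frob A B = trace (A ** B)"

definition outer :: "real^'n \<Rightarrow> real^'n \<Rightarrow> real^'n^'n" where
  "outer a c = (\<chi> i j. a $ i * c $ j)"

definition Sym :: "real^'n^'n \<Rightarrow> real^'n^'n" where
  "Sym M = (1/2) *\<^sub>R (M + transpose M)"

definition rank_one_generated :: "(real^'n^'n) set \<Rightarrow> bool" where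
  "rank_one_generated S \<longleftrightarrow> S = convex hull (S \<inter> {outer x x | x. True})"

definition T2 :: "real^'n^'n \<Rightarrow> real^'n^'n \<Rightarrow> (real^'n^'n) set" where
  "T2 M1 M2 = {X. psd X \<and> frob M1 X = 0 \<and> frob M2 X = 0}"

end

theory Submission
  imports Defs
begin



definition qf :: "real^'n^'n \<Rightarrow> real^'n \<Rightarrow> real" where
  "qf M x = x \<bullet> (M *v x)"
definition bf :: "real^'n^'n \<Rightarrow> real^'n \<Rightarrow> real^'n \<Rightarrow> real" where
  "bf M x y = x \<bullet> (M *v y)"

lemma sym_mv: "sym_mat M \<Longrightarrow> x v* M = M *v x"
  by (metis sym_mat_def transpose_matrix_vector)

lemma bf_sym: "sym_mat M \<Longrightarrow> bf M x y = bf M y x"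
  unfolding bf_def by (metis dot_lmul_matrix inner_commute sym_mv)

lemma bf_add1: "bf M (x + y) z = bf M x z + bf M y z"
  by (simp add: bf_def inner_add_left)
lemma bf_add2: "bf M x (y + z) = bf M x y + bf M x z"
  by (simp add: bf_def matrix_vector_right_distrib inner_add_right)
lemma bf_scale1: "bf M (c *\<^sub>R x) z = c * bf M x z"
  by (simp add: bf_def)
lemma bf_scale2: "bf M x (c *\<^sub>R z) = c * bf M x z"
  by (simp add: bf_def matrix_vector_mult_scaleR)
lemma bf_diff1: "bf M (x - y) z = bf M x z - bf M y z"
  by (simp add: bf_def inner_diff_left)
lemma bf_diff2: "bf M x (y - z) = bf M x y - bf M x z"
  by (simp add: bf_def matrix_vector_mult_diff_distrib inner_diff_right)
lemma qf_bf: "qf M x = bf M x x"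
  by (simp add: qf_def bf_def)

lemmas bf_lin = bf_add1 bf_add2 bf_scale1 bf_scale2 bf_diff1 bf_diff2

lemma qf_add: "sym_mat M \<Longrightarrow> qf M (x + y) = qf M x + 2 * bf M x y + qf M y"
  by (simp add: qf_bf bf_lin bf_sym[of M y x])

lemma qf_scale: "qf M (c *\<^sub>R x) = c^2 * qf M x"
  by (simp add: qf_bf bf_lin power2_eq_square)

lemma qf_add_scale: "sym_mat M \<Longrightarrow> qf M (x + t *\<^sub>R y) = qf M x + 2 * t * bf M x y + t^2 * qf M y"
  by (simp add: qf_add qf_scale bf_lin)

lemma qf_comb: "qf (a *\<^sub>R A + b *\<^sub>R B) x = a * qf A x + b * qf B x"
  by (simp add: qf_def matrix_vector_mult_add_rdistrib scaleR_matrix_vector_assoc[symmetric] inner_add_right)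

lemma qf_neg: "qf (- A) x = - qf A x"
  using qf_comb[of "-1" A 0 A x] by simp

lemma neg_mv: "(- A) *v y = - (A *v y)" for A :: "real^'n^'m"
  by (simp add: matrix_vector_mult_def vec_eq_iff sum_negf[symmetric])

lemma bf_neg: "bf (- A) x y = - bf A x y"
  by (simp add: bf_def neg_mv)

lemma sym_comb: "sym_mat A \<Longrightarrow> sym_mat B \<Longrightarrow> sym_mat (a *\<^sub>R A + b *\<^sub>R B)"
  unfolding sym_mat_def by (simp add: transpose_def vec_eq_iff)

lemma sym_neg: "sym_mat A \<Longrightarrow> sym_mat (- A)"
  unfolding sym_mat_def by (simp add: transpose_def vec_eq_iff)

lemma outer_mv: "outer a c *v z = (c \<bullet> z) *\<^sub>R a"
  by (simp add: outer_def matrix_vector_mult_def vec_eq_iff inner_vec_def sum_distrib_left mult_ac)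

lemma outer_vm: "z v* outer a c = (a \<bullet> z) *\<^sub>R c"
  by (simp add: outer_def vector_matrix_mult_def vec_eq_iff inner_vec_def sum_distrib_left mult_ac)

lemma sym_outer: "sym_mat (outer x x)"
  unfolding sym_mat_def by (simp add: transpose_def outer_def vec_eq_iff mult.commute)

lemma frob_outer: "frob M (outer x x) = qf M x"
  by (simp add: frob_def trace_def matrix_matrix_mult_def outer_def qf_def matrix_vector_mult_def inner_vec_def sum_distrib_left mult_ac)

lemma frob_lin: "frob M (a *\<^sub>R A + b *\<^sub>R B) = a * frob M A + b * frob M B"
  by (simp add: frob_def trace_def matrix_matrix_mult_def sum_distrib_left sum.distrib algebra_simps)

lemma Sym_outer_qf: "qf (Sym (outer a c)) x = (a \<bullet> x) * (c \<bullet> x)"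
  apply (simp add: Sym_def qf_def matrix_vector_mult_add_rdistrib scaleR_matrix_vector_assoc[symmetric] inner_add_right outer_mv
      outer_vm)
  by (simp add: inner_commute)


lemma sym_Sym: "sym_mat (Sym M)"
  unfolding sym_mat_def Sym_def by (simp add: transpose_def vec_eq_iff add.commute)

lemma bf_polar: "sym_mat M \<Longrightarrow> bf M x y = (qf M (x + y) - qf M x - qf M y) / 2"
  by (simp add: qf_add)

lemma entry_bf: "A $ i $ j = bf A (axis i 1) (axis j 1)"
  by (simp add: bf_def matrix_vector_mult_basis inner_axis' column_def)

lemma qf_eq_imp_eq:
  assumes "sym_mat A" "sym_mat B" "\<And>x. qf A x = qf B x"
  shows "A = B"
proof -
  have "\<And>x y. bf A x y = bf B x y"
    using assms by (simp add: bf_polar)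
  then show ?thesis by (simp add: vec_eq_iff entry_bf[of A] entry_bf[of B])
qed

lemma qf_cont: "continuous_on UNIV g \<Longrightarrow> continuous_on UNIV (\<lambda>e. qf M (g e))"
  unfolding qf_def
  by (intro continuous_intros bounded_linear.continuous_on[OF matrix_vector_mul_bounded_linear]) auto

lemma cont_pos:
  fixes f :: "real \<Rightarrow> real"
  assumes "continuous_on UNIV f" "f 0 > 0"
  shows "\<exists>d>0. \<forall>e. \<bar>e\<bar> < d \<longrightarrow> f e > 0"
proof -
  have "isCont f 0"
    using assms(1) by (metis continuous_on_eq_continuous_at open_UNIV UNIV_I)
  then have "f \<midarrow>0\<rightarrow> f 0" unfolding isCont_def .
  from LIM_fun_gt_zero[OF this assms(2)] obtain r where r: "r > 0" "\<forall>x. x \<noteq> 0 \<and> \<bar>0 - x\<bar> < r \<longrightarrow> 0 < f x"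
    by blast
  have "f e > 0" if "\<bar>e\<bar> < r" for e
  proof (cases "e = 0")
    case True then show ?thesis using assms(2) by simp
  next
    case False then show ?thesis using r(2) that by simp
  qed
  then show ?thesis using r(1) by blast
qed

lemma roots:
  assumes S: "sym_mat A" and px: "qf A x > 0" and ny: "qf A y < 0"
  shows "\<exists>t1 t2. t1 > 0 \<and> t2 < 0 \<and> qf A (x + t1 *\<^sub>R y) = 0 \<and> qf A (x + t2 *\<^sub>R y) = 0
     \<and> t1 * t2 = qf A x / qf A y"
proof -
  define p where "p = qf A x"
  define n where "n = qf A y"
  define b where "b = bf A x y"
  define s where "s = sqrt (b^2 - p * n)"
  have pn: "p * n < 0" using px ny p_def n_def by (simp add: mult_pos_neg)
  have d0: "b^2 - p * n \<ge> 0" using pn zero_le_power2[of b] by linarith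
  then have s2: "s^2 = b^2 - p * n" unfolding s_def by (rule real_sqrt_pow2)
  have s0: "s \<ge> 0" unfolding s_def using d0 by simp
  have sb: "s > \<bar>b\<bar>"
  proof -
    have "\<bar>b\<bar>^2 < s^2" using s2 pn by simp
    then show ?thesis by (rule power2_less_imp_less[OF _ s0])
  qed
  define t1 where "t1 = (-b - s) / n"
  define t2 where "t2 = (-b + s) / n"
  have n0: "n < 0" using ny n_def by simp
  have nt1: "n * t1 = -b - s" using n0 t1_def by simp
  have nt2: "n * t2 = -b + s" using n0 t2_def by simp
  have t1p: "t1 > 0" unfolding t1_def using n0 sb by (intro divide_neg_neg) auto
  have t2n: "t2 < 0" unfolding t2_def using n0 sb by (intro divide_pos_neg) auto
  have q: "qf A (x + t *\<^sub>R y) = p + 2 * t * b + t^2 * n" for t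
    using S by (simp add: qf_add_scale p_def n_def b_def)
  have "n * (p + 2 * t1 * b + t1^2 * n) = n * p + 2 * b * (n * t1) + (n * t1)^2"
    by (simp add: algebra_simps power2_eq_square)
  also have "\<dots> = n * p + 2 * b * (-b - s) + (-b - s)^2" using nt1 by simp
  also have "\<dots> = n * p - b^2 + s^2" by (simp add: power2_eq_square algebra_simps)
  also have "\<dots> = 0" using s2 by simp
  finally have r1: "qf A (x + t1 *\<^sub>R y) = 0" using n0 q by simp
  have "n * (p + 2 * t2 * b + t2^2 * n) = n * p + 2 * b * (n * t2) + (n * t2)^2"
    by (simp add: algebra_simps power2_eq_square)
  also have "\<dots> = n * p + 2 * b * (-b + s) + (-b + s)^2" using nt2 by simp
  also have "\<dots> = n * p - b^2 + s^2" by (simp add: power2_eq_square algebra_simps)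
  also have "\<dots> = 0" using s2 by simp
  finally have r2: "qf A (x + t2 *\<^sub>R y) = 0" using n0 q by simp
  have "(n * t1) * (n * t2) = (-b - s) * (-b + s)" using nt1 nt2 by simp
  also have "\<dots> = b^2 - s^2" by (simp add: power2_eq_square algebra_simps)
  also have "\<dots> = n * p" using s2 by simp
  finally have "n * (n * (t1 * t2)) = n * p" by (simp add: algebra_simps)
  then have "n * (t1 * t2) = p" using n0 by simp
  then have "t1 * t2 = p / n" using n0 by (simp add: field_simps)
  then have "t1 * t2 = qf A x / qf A y" by (simp add: p_def n_def)
  with t1p t2n r1 r2 show ?thesis by blast
qed

lemma aux1: "(y::real) \<noteq> 0 \<Longrightarrow> (-y) * (P - (x / y) * D) = P * (-y) + D * x"
  by (simp add: field_simps)

lemma aux2: "(a::real) > 0 \<Longrightarrow> 0 \<le> a * X \<Longrightarrow> 0 \<le> X"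
  by (simp add: zero_le_mult_iff)

lemma slemma_key:
  assumes SA: "sym_mat A" and SB: "sym_mat B"
    and Z: "\<And>z. qf A z = 0 \<Longrightarrow> qf B z \<ge> 0"
    and px: "qf A x > 0" and ny: "qf A y < 0"
  shows "qf B x * (- qf A y) + qf B y * qf A x \<ge> 0"
proof -
  obtain t1 t2 where t: "t1 > 0" "t2 < 0" "qf A (x + t1 *\<^sub>R y) = 0" "qf A (x + t2 *\<^sub>R y) = 0"
    "t1 * t2 = qf A x / qf A y"
    using roots[OF SA px ny] by blast
  define P where "P = qf B x"
  define C where "C = bf B x y"
  define D where "D = qf B y"
  have h1: "P + 2 * t1 * C + t1^2 * D \<ge> 0"
    using Z[OF t(3)] SB by (simp add: qf_add_scale P_def C_def D_def)
  have h2: "P + 2 * t2 * C + t2^2 * D \<ge> 0"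
    using Z[OF t(4)] SB by (simp add: qf_add_scale P_def C_def D_def)
  have g1: "(-t2) * (P + 2 * t1 * C + t1^2 * D) \<ge> 0"
    using h1 t(2) by (intro mult_nonneg_nonneg) auto
  have g2: "t1 * (P + 2 * t2 * C + t2^2 * D) \<ge> 0"
    using h2 t(1) by (intro mult_nonneg_nonneg) auto
  have "(-t2) * (P + 2 * t1 * C + t1^2 * D) + t1 * (P + 2 * t2 * C + t2^2 * D) \<ge> 0"
    using g1 g2 by linarith
  moreover have "(-t2) * (P + 2 * t1 * C + t1^2 * D) + t1 * (P + 2 * t2 * C + t2^2 * D)
      = (t1 - t2) * (P - (t1 * t2) * D)"
    by (simp add: algebra_simps power2_eq_square)
  ultimately have prod: "(t1 - t2) * (P - (t1 * t2) * D) \<ge> 0" by linarith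
  have tp: "t1 - t2 > 0" using t(1,2) by linarith
  have e1: "P - (t1 * t2) * D \<ge> 0" by (rule aux2[OF tp prod])
  have e2: "P - (qf A x / qf A y) * D \<ge> 0" using e1 unfolding t(5) .
  have e3: "0 \<le> - qf A y" using ny by linarith
  have e4: "(- qf A y) * (P - (qf A x / qf A y) * D) \<ge> 0" by (rule mult_nonneg_nonneg[OF e3 e2])
  have e5: "(- qf A y) * (P - (qf A x / qf A y) * D) = P * (- qf A y) + D * qf A x"
    by (rule aux1) (use ny in linarith)
  have "P * (- qf A y) + D * qf A x \<ge> 0" using e4 e5 by linarith
  then show ?thesis unfolding P_def D_def .
qed

lemma slemma:
  assumes SA: "sym_mat A" and SB: "sym_mat B"
    and Z: "\<And>z. qf A z = 0 \<Longrightarrow> qf B z \<ge> 0"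
    and pu: "qf A u > 0" and nv: "qf A v < 0"
  shows "\<exists>l. \<forall>x. qf B x + l * qf A x \<ge> 0"
proof -
  define S where "S = {- qf B x / qf A x | x. qf A x > 0}"
  have ne: "S \<noteq> {}" using pu S_def by blast
  have bnd: "s \<le> qf B y / (- qf A y)" if "s \<in> S" "qf A y < 0" for s y
  proof -
    obtain x where x: "s = - qf B x / qf A x" "qf A x > 0" using \<open>s \<in> S\<close> S_def by blast
    have k: "qf B x * (- qf A y) + qf B y * qf A x \<ge> 0" using slemma_key[OF SA SB Z x(2) that(2)] .
    have "- qf B x / qf A x \<le> qf B y / (- qf A y)"
      using x(2) that(2) k by (simp add: field_simps)
    then show ?thesis using x(1) by simp
  qed
  have bdd: "bdd_above S"
  proof (rule bdd_aboveI)
    fix s assume "s \<in> S" then show "s \<le> qf B v / (- qf A v)" by (rule bnd[OF _ nv])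
  qed
  define l where "l = Sup S"
  have "qf B x + l * qf A x \<ge> 0" for x
  proof -
    consider (less) "qf A x < 0" | (equal) "qf A x = 0" | (greater) "qf A x > 0" by linarith
    then show ?thesis
  proof cases
    case less
    have "l \<le> qf B x / (- qf A x)" unfolding l_def using ne bnd less by (intro cSup_least) auto
    then show ?thesis using less by (simp add: field_simps)
  next
    case equal
    then show ?thesis using Z by simp
  next
    case greater
    have "- qf B x / qf A x \<in> S" using greater S_def by blast
    then have "- qf B x / qf A x \<le> l" unfolding l_def using bdd by (simp add: cSup_upper)
    then show ?thesis using greater by (simp add: field_simps)
  qed
  qed
  then show ?thesis by blast
qed



lemma sum_mv: "finite S \<Longrightarrow> (sum (\<lambda>W. c W *\<^sub>R W) S) *v w = sum (\<lambda>W. c W *\<^sub>R (W *v w)) S"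
  for w :: "real^'n" and c :: "real^'n^'m \<Rightarrow> real"
  by (induct rule: finite_induct) (simp_all add: matrix_vector_mult_add_rdistrib scaleR_matrix_vector_assoc[symmetric])

lemma outer_q: "w \<bullet> (outer z z *v w) = (z \<bullet> w)^2"
  by (simp add: outer_mv power2_eq_square inner_commute)

lemma proj2:
  fixes x y z :: "real^'n"
  defines "D \<equiv> (x \<bullet> x) * (y \<bullet> y) - (x \<bullet> y)^2"
  defines "\<alpha> \<equiv> (y \<bullet> y) * (z \<bullet> x) - (x \<bullet> y) * (z \<bullet> y)"
  defines "\<beta> \<equiv> (x \<bullet> x) * (z \<bullet> y) - (x \<bullet> y) * (z \<bullet> x)"
  assumes orth: "\<And>w. x \<bullet> w = 0 \<Longrightarrow> y \<bullet> w = 0 \<Longrightarrow> z \<bullet> w = 0"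
  shows "D *\<^sub>R z = \<alpha> *\<^sub>R x + \<beta> *\<^sub>R y"
proof -
  define \<rho> where "\<rho> = D *\<^sub>R z - \<alpha> *\<^sub>R x - \<beta> *\<^sub>R y"
  have rx: "x \<bullet> \<rho> = 0"
    unfolding \<rho>_def D_def \<alpha>_def \<beta>_def
    by (simp add: inner_diff_right inner_commute power2_eq_square algebra_simps)
  have ry: "y \<bullet> \<rho> = 0"
    unfolding \<rho>_def D_def \<alpha>_def \<beta>_def
    by (simp add: inner_diff_right inner_commute power2_eq_square algebra_simps)
  have rz: "z \<bullet> \<rho> = 0" using orth rx ry by blast
  have "\<rho> \<bullet> \<rho> = D * (z \<bullet> \<rho>) - \<alpha> * (x \<bullet> \<rho>) - \<beta> * (y \<bullet> \<rho>)"
    by (simp add: \<rho>_def inner_diff_left)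
  also have "\<dots> = 0" using rx ry rz by simp
  finally have "\<rho> = 0" by simp
  then show ?thesis unfolding \<rho>_def by (simp add: algebra_simps)
qed

lemma gram_nz:
  fixes x y :: "real^'n"
  assumes "x \<noteq> 0" and b: "bf M x y \<noteq> 0" and q: "qf M x = 0"
  shows "(x \<bullet> x) * (y \<bullet> y) - (x \<bullet> y)^2 \<noteq> 0"
proof
  assume D0: "(x \<bullet> x) * (y \<bullet> y) - (x \<bullet> y)^2 = 0"
  define v where "v = (x \<bullet> x) *\<^sub>R y - (x \<bullet> y) *\<^sub>R x"
  have "v \<bullet> v = (x \<bullet> x) * ((x \<bullet> x) * (y \<bullet> y) - (x \<bullet> y)^2)"
    unfolding v_def by (simp add: inner_diff_left inner_diff_right inner_commute power2_eq_square algebra_simps)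
  then have "v = 0" using D0 by simp
  then have "bf M x v = 0" by (simp add: bf_def)
  moreover have "bf M x v = (x \<bullet> x) * bf M x y - (x \<bullet> y) * qf M x"
    unfolding v_def by (simp add: bf_lin qf_bf)
  ultimately have "(x \<bullet> x) * bf M x y = 0" using q by simp
  then show False using b assms(1) by simp
qed

lemma K:
  assumes S1: "sym_mat M1" and S2: "sym_mat M2" and R: "rank_one_generated (T2 M1 M2)"
    and x1: "qf M1 x = 0" and y1: "qf M1 y = 0" and x2: "qf M2 x > 0" and y2: "qf M2 y < 0"
  shows "bf M1 x y = 0"
proof (rule ccontr)
  assume b: "bf M1 x y \<noteq> 0"
  define r where "r = - qf M2 y"
  define s where "s = qf M2 x"
  have r0: "r > 0" and s0: "s > 0" using x2 y2 r_def s_def by auto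
  define Y where "Y = r *\<^sub>R outer x x + s *\<^sub>R outer y y"
  have Yv: "Y *v w = (r * (x \<bullet> w)) *\<^sub>R x + (s * (y \<bullet> w)) *\<^sub>R y" for w
    by (simp add: Y_def matrix_vector_mult_add_rdistrib scaleR_matrix_vector_assoc[symmetric] outer_mv)
  have Yq: "w \<bullet> (Y *v w) = r * (x \<bullet> w)^2 + s * (y \<bullet> w)^2" for w
    by (simp add: Yv inner_add_right inner_commute power2_eq_square)
  have symY: "sym_mat Y" unfolding Y_def by (intro sym_comb sym_outer)
  have "psd Y" unfolding psd_def using symY Yq r0 s0 by simp
  moreover have "frob M1 Y = 0" unfolding Y_def frob_lin frob_outer using x1 y1 by simp
  moreover have "frob M2 Y = 0" unfolding Y_def frob_lin frob_outer using r_def s_def by simp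
  ultimately have YT: "Y \<in> T2 M1 M2" by (simp add: T2_def)
  then have "Y \<in> convex hull (T2 M1 M2 \<inter> {outer x x | x. True})"
    using R unfolding rank_one_generated_def by blast
  then obtain Sf c where Sf: "finite Sf" "Sf \<subseteq> T2 M1 M2 \<inter> {outer x x | x. True}"
    "\<forall>W\<in>Sf. 0 \<le> c W" "sum c Sf = 1" "(\<Sum>W\<in>Sf. c W *\<^sub>R W) = Y"
    unfolding convex_hull_explicit by blast
  have x0: "x \<noteq> 0" using x2 by (auto simp: qf_def)
  define D where "D = (x \<bullet> x) * (y \<bullet> y) - (x \<bullet> y)^2"
  have D0: "D \<noteq> 0" unfolding D_def using gram_nz[OF x0 b x1] .
  have Ysum: "w \<bullet> (Y *v w) = (\<Sum>W\<in>Sf. c W * (w \<bullet> (W *v w)))" for w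
    using Sf(5)[symmetric] sum_mv[OF Sf(1), of c w] by (simp add: inner_sum_right)
  have term0: "c W *\<^sub>R W = 0" if W: "W \<in> Sf" for W
  proof (cases "c W = 0")
    case True then show ?thesis by simp
  next
    case False
    then have cW: "c W > 0" using Sf(3) W by force
    obtain z where z: "W = outer z z" using Sf(2) W by blast
    have WT: "W \<in> T2 M1 M2" using Sf(2) W by blast
    then have z1: "qf M1 z = 0" and z2: "qf M2 z = 0"
      using z by (auto simp: T2_def frob_outer)
    have nonneg: "\<forall>W\<in>Sf. 0 \<le> c W * (w \<bullet> (W *v w))" for w
    proof
      fix W' assume W': "W' \<in> Sf"
      obtain z' where "W' = outer z' z'" using Sf(2) W' by blast
      then show "0 \<le> c W' * (w \<bullet> (W' *v w))" using Sf(3) W' by (simp add: outer_q)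
    qed
    have orth: "z \<bullet> w = 0" if "x \<bullet> w = 0" "y \<bullet> w = 0" for w
    proof -
      have sumeq: "(\<Sum>W\<in>Sf. c W * (w \<bullet> (W *v w))) = 0" using Ysum[of w] Yq[of w] that by simp
      have nn: "\<And>W'. W' \<in> Sf \<Longrightarrow> 0 \<le> c W' * (w \<bullet> (W' *v w))" using nonneg[of w] by blast
      have "\<forall>W'\<in>Sf. c W' * (w \<bullet> (W' *v w)) = 0"
        by (rule iffD1[OF sum_nonneg_eq_0_iff[OF Sf(1) nn] sumeq])
      then have "c W * (w \<bullet> (W *v w)) = 0" using W by (rule bspec)
      then have "(z \<bullet> w)^2 = 0" using cW z by (simp add: outer_q)
      then show ?thesis by simp
    qed
    define \<alpha> where "\<alpha> = (y \<bullet> y) * (z \<bullet> x) - (x \<bullet> y) * (z \<bullet> y)"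
    define \<beta> where "\<beta> = (x \<bullet> x) * (z \<bullet> y) - (x \<bullet> y) * (z \<bullet> x)"
    have Dz: "D *\<^sub>R z = \<alpha> *\<^sub>R x + \<beta> *\<^sub>R y"
      unfolding D_def \<alpha>_def \<beta>_def by (rule proj2) (use orth in blast)
    have "qf M1 (D *\<^sub>R z) = 0" using z1 by (simp add: qf_scale)
    then have "qf M1 (\<alpha> *\<^sub>R x + \<beta> *\<^sub>R y) = 0" using Dz by simp
    then have "2 * \<alpha> * \<beta> * bf M1 x y = 0"
      using S1 x1 y1 by (simp add: qf_add qf_scale bf_lin) blast
    then have ab: "\<alpha> * \<beta> = 0" using b by simp
    have "qf M2 (D *\<^sub>R z) = 0" using z2 by (simp add: qf_scale)
    then have "qf M2 (\<alpha> *\<^sub>R x + \<beta> *\<^sub>R y) = 0" using Dz by simp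
    then have "\<alpha>^2 * s + 2 * (\<alpha> * \<beta>) * bf M2 x y - \<beta>^2 * r = 0"
      using S2 by (simp add: qf_add qf_scale bf_lin r_def s_def algebra_simps)
    then have e2: "\<alpha>^2 * s = \<beta>^2 * r" using ab by simp
    have "\<alpha> = 0 \<and> \<beta> = 0"
    proof (cases "\<alpha> = 0")
      case True then show ?thesis using e2 r0 by simp
    next
      case False then have "\<beta> = 0" using ab by simp
      then show ?thesis using e2 s0 by simp
    qed
    then have "D *\<^sub>R z = 0" using Dz by simp
    then have "z = 0" using D0 by simp
    then show ?thesis using z by (simp add: outer_def vec_eq_iff)
  qed
  have "Y = 0" using Sf(5) term0 by simp
  moreover have "x \<bullet> (Y *v x) > 0"
  proof -
    have "x \<bullet> x > 0" using x0 by simp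
    then have "r * (x \<bullet> x)^2 > 0" using r0 by simp
    moreover have "s * (y \<bullet> x)^2 \<ge> 0" using s0 by simp
    ultimately show ?thesis using Yq[of x] by linarith
  qed
  ultimately show False by simp
qed



lemma qf_lin2: "sym_mat M \<Longrightarrow> qf M (a *\<^sub>R x + b *\<^sub>R y) = a^2 * qf M x + 2 * a * b * bf M x y + b^2 * qf M y"
  by (simp add: qf_add qf_scale bf_lin)

lemma bf_cont: "continuous_on UNIV g \<Longrightarrow> continuous_on UNIV (\<lambda>e. bf M x (g e))"
  unfolding bf_def
  by (intro continuous_intros bounded_linear.continuous_on[OF matrix_vector_mul_bounded_linear]) auto

lemma perturb_pos:
  assumes "qf B z > 0"
  shows "\<exists>d>0. \<forall>t. \<bar>t\<bar> < d \<longrightarrow> qf B (z + t *\<^sub>R w) > 0"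
proof -
  have c: "continuous_on UNIV (\<lambda>t. qf B (z + t *\<^sub>R w))"
    by (rule qf_cont) (intro continuous_intros)
  show ?thesis using cont_pos[OF c] assms by simp
qed

lemma FL:
  assumes S: "sym_mat M" and a0: "a \<noteq> 0" and H: "\<And>w. a \<bullet> w = 0 \<Longrightarrow> qf M w = 0"
  shows "\<exists>m. \<forall>w. qf M w = (a \<bullet> w) * (m \<bullet> w)"
proof -
  define aa where "aa = a \<bullet> a"
  have aa0: "aa > 0" using a0 aa_def by simp
  define m where "m = (2 / aa) *\<^sub>R (M *v a) - (qf M a / aa^2) *\<^sub>R a"
  have "qf M w = (a \<bullet> w) * (m \<bullet> w)" for w
  proof -
    define k where "k = (a \<bullet> w) / aa"
    define p where "p = w - k *\<^sub>R a"
    have ap: "a \<bullet> p = 0" unfolding p_def k_def using aa0 by (simp add: inner_diff_right aa_def)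
    have qp: "qf M p = 0" using H[OF ap] .
    have w: "w = p + k *\<^sub>R a" unfolding p_def by simp
    have bpa: "bf M p a = w \<bullet> (M *v a) - k * qf M a"
      unfolding p_def by (simp add: bf_def qf_def inner_diff_left)
    have "qf M w = qf M p + 2 * k * bf M p a + k^2 * qf M a"
      using qf_add_scale[OF S, of p k a] w by simp
    also have "\<dots> = 2 * k * (w \<bullet> (M *v a)) - k^2 * qf M a"
      unfolding bpa qp by (simp add: algebra_simps power2_eq_square)
    also have "\<dots> = (a \<bullet> w) * (m \<bullet> w)"
      unfolding m_def k_def using aa0
      by (simp add: inner_diff_left inner_commute[of "M *v a" w] inner_commute[of a w] field_simps power2_eq_square)
    finally show ?thesis .
  qed
  then show ?thesis by blast
qed

lemma xt_zero:
  assumes S: "sym_mat M" and q: "qf M x = 0"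
  shows "qf M (qf M w *\<^sub>R x + (- 2 * bf M x w) *\<^sub>R w) = 0"
  unfolding qf_lin2[OF S] using q by (simp add: power2_eq_square algebra_simps)

lemma step0:
  assumes S1: "sym_mat M1" and SB: "sym_mat B"
    and x0: "qf M1 x0 = 0" "qf B x0 > 0" and w: "qf M1 w = 0" "M1 *v w \<noteq> 0"
  shows "\<exists>x. qf M1 x = 0 \<and> qf B x > 0 \<and> M1 *v x \<noteq> 0"
proof (cases "M1 *v x0 = 0")
  case False then show ?thesis using x0 by blast
next
  case True
  obtain d where d: "d > 0" "\<forall>t. \<bar>t\<bar> < d \<longrightarrow> qf B (x0 + t *\<^sub>R w) > 0"
    using perturb_pos[OF x0(2)] by blast
  define t where "t = d / 2"
  have t0: "t \<noteq> 0" "\<bar>t\<bar> < d" using d(1) t_def by auto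
  have b: "bf M1 x0 w = 0" using True bf_sym[OF S1, of x0 w] by (simp add: bf_def)
  have "qf M1 (x0 + t *\<^sub>R w) = 0" using qf_add_scale[OF S1] x0(1) w(1) b by simp
  moreover have "qf B (x0 + t *\<^sub>R w) > 0" using d(2) t0 by blast
  moreover have "M1 *v (x0 + t *\<^sub>R w) \<noteq> 0"
    using True t0 w(2) by (simp add: matrix_vector_right_distrib matrix_vector_mult_scaleR)
  ultimately show ?thesis by blast
qed

lemma exists_w:
  assumes S1: "sym_mat M1" and u: "qf M1 u > 0" and v: "qf M1 v < 0"
  shows "\<exists>w. qf M1 w = 0 \<and> M1 *v w \<noteq> 0"
proof (rule ccontr)
  assume H: "\<not> ?thesis"
  obtain t1 t2 where t: "t1 > 0" "t2 < 0" "qf M1 (u + t1 *\<^sub>R v) = 0" "qf M1 (u + t2 *\<^sub>R v) = 0"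
    using roots[OF S1 u v] by blast
  have "M1 *v (u + t1 *\<^sub>R v) = 0" "M1 *v (u + t2 *\<^sub>R v) = 0" using H t by auto
  then have "M1 *v (u + t1 *\<^sub>R v) - M1 *v (u + t2 *\<^sub>R v) = 0" by simp
  then have "(t1 - t2) *\<^sub>R (M1 *v v) = 0"
    by (simp add: matrix_vector_right_distrib matrix_vector_mult_scaleR algebra_simps)
  then have "M1 *v v = 0" using t(1,2) by simp
  then have "qf M1 v = 0" by (simp add: qf_def)
  then show False using v by simp
qed



lemma step1:
  assumes S1: "sym_mat M1" and S2: "sym_mat M2"
    and KB: "\<And>x y. qf M1 x = 0 \<Longrightarrow> qf M1 y = 0 \<Longrightarrow> qf M2 x > 0 \<Longrightarrow> qf M2 y < 0 \<Longrightarrow> bf M1 x y = 0"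
    and x: "qf M1 x = 0" "qf M2 x > 0" "M1 *v x \<noteq> 0"
    and y: "qf M1 y = 0" "qf M2 y < 0" "M1 *v y \<noteq> 0"
  shows "\<forall>w. w \<bullet> (M1 *v x) = 0 \<longrightarrow> qf M1 w = 0"
proof (rule ccontr)
  assume "\<not> ?thesis"
  then obtain w0 where w0: "w0 \<bullet> (M1 *v x) = 0" "qf M1 w0 \<noteq> 0" by blast
  define a where "a = M1 *v x"
  have bxy: "bf M1 x y = 0" using KB[OF x(1) y(1) x(2) y(2)] .
  have bxw0: "bf M1 x w0 = 0" using w0(1) bf_sym[OF S1, of x w0] by (simp add: bf_def)
  have bxv: "bf M1 x v = v \<bullet> a" for v using bf_sym[OF S1, of x v] by (simp add: bf_def a_def)
  have key: "bf M1 v y = 0" if va: "v \<bullet> a \<noteq> 0" for v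
  proof -
    define xt where "xt e = qf M1 (w0 + e *\<^sub>R v) *\<^sub>R x + (- 2 * bf M1 x (w0 + e *\<^sub>R v)) *\<^sub>R (w0 + e *\<^sub>R v)" for e
    have cg: "continuous_on UNIV (\<lambda>e::real. w0 + e *\<^sub>R v)" by (intro continuous_intros)
    have cx: "continuous_on UNIV xt"
      unfolding xt_def
      by (intro continuous_intros qf_cont[OF cg] bf_cont[OF cg])
    have c: "continuous_on UNIV (\<lambda>e. qf M2 (xt e))" by (rule qf_cont[OF cx])
    have "xt 0 = qf M1 w0 *\<^sub>R x" unfolding xt_def using bxw0 by simp
    then have "qf M2 (xt 0) = (qf M1 w0)^2 * qf M2 x" by (simp add: qf_scale)
    moreover have "(qf M1 w0)^2 > 0" using w0(2) by simp
    ultimately have "qf M2 (xt 0) > 0" using x(2) by simp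
    then obtain d where d: "d > 0" "\<forall>e. \<bar>e\<bar> < d \<longrightarrow> qf M2 (xt e) > 0"
      using cont_pos[OF c] by blast
    have eq: "bf M1 w0 y + e * bf M1 v y = 0" if e: "e \<noteq> 0" "\<bar>e\<bar> < d" for e
    proof -
      define w where "w = w0 + e *\<^sub>R v"
      have xtw: "xt e = qf M1 w *\<^sub>R x + (- 2 * bf M1 x w) *\<^sub>R w" unfolding xt_def w_def by simp
      have "qf M1 (xt e) = 0" unfolding xtw by (rule xt_zero[OF S1 x(1)])
      moreover have "qf M2 (xt e) > 0" using d(2) e by blast
      ultimately have "bf M1 (xt e) y = 0" using KB y by blast
      moreover have "bf M1 (xt e) y = - 2 * bf M1 x w * bf M1 w y"
        unfolding xtw by (simp add: bf_lin bxy)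
      ultimately have "bf M1 x w * bf M1 w y = 0" by simp
      moreover have "bf M1 x w = e * (v \<bullet> a)" unfolding w_def using w0(1) by (simp add: bf_lin bxv a_def)
      moreover have "bf M1 w y = bf M1 w0 y + e * bf M1 v y" unfolding w_def by (simp add: bf_lin)
      ultimately show ?thesis using e(1) va by simp
    qed
    have e1: "bf M1 w0 y + (d/2) * bf M1 v y = 0" using eq[of "d/2"] d(1) by simp
    have e2: "bf M1 w0 y + (d/4) * bf M1 v y = 0" using eq[of "d/4"] d(1) by simp
    have "d * bf M1 v y = 0" using e1 e2 by linarith
    then show ?thesis using d(1) by simp
  qed
  define g where "g = M1 *v y"
  have bg: "bf M1 v y = v \<bullet> g" for v by (simp add: bf_def g_def)
  have "g = 0"
  proof (cases "g \<bullet> a = 0")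
    case False
    then have "g \<bullet> g = 0" using key[of g] bg by simp
    then show ?thesis by simp
  next
    case True
    have "(g + a) \<bullet> a = a \<bullet> a" using True by (simp add: inner_add_left)
    moreover have "a \<bullet> a \<noteq> 0" using x(3) a_def by simp
    ultimately have "(g + a) \<bullet> g = 0" using key[of "g + a"] bg by simp
    then have "g \<bullet> g + a \<bullet> g = 0" by (simp add: inner_add_left)
    moreover have "a \<bullet> g = 0" using True by (simp add: inner_commute)
    ultimately have "g \<bullet> g = 0" by simp
    then show ?thesis by simp
  qed
  then show False using y(3) g_def by simp
qed



lemma cross:
  assumes S1: "sym_mat M1" and q: "\<And>w. qf M1 w = (a \<bullet> w) * (m \<bullet> w)"
    and KB: "\<And>x y. qf M1 x = 0 \<Longrightarrow> qf M1 y = 0 \<Longrightarrow> qf B x > 0 \<Longrightarrow> qf B y < 0 \<Longrightarrow> bf M1 x y = 0"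
    and ax: "a \<bullet> x = 0" and mx: "m \<bullet> x \<noteq> 0" and my: "m \<bullet> y = 0" and ay: "a \<bullet> y \<noteq> 0"
  shows "\<not> (qf B x > 0 \<and> qf B y < 0)" and "\<not> (qf B x < 0 \<and> qf B y > 0)"
proof -
  have qx: "qf M1 x = 0" using q[of x] ax by simp
  have qy: "qf M1 y = 0" using q[of y] my by simp
  have "bf M1 x y = (qf M1 (x + y) - qf M1 x - qf M1 y) / 2" by (rule bf_polar[OF S1])
  also have "\<dots> = (a \<bullet> y) * (m \<bullet> x) / 2" unfolding q using ax my by (simp add: inner_add_right)
  finally have bfe: "bf M1 x y = (a \<bullet> y) * (m \<bullet> x) / 2" .
  have b: "bf M1 x y \<noteq> 0" unfolding bfe using mx ay by simp
  show "\<not> (qf B x > 0 \<and> qf B y < 0)" using KB[OF qx qy] b by blast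
  have e: "bf M1 y x = bf M1 x y" by (rule bf_sym[OF S1])
  show "\<not> (qf B x < 0 \<and> qf B y > 0)"
  proof
    assume h: "qf B x < 0 \<and> qf B y > 0"
    have "bf M1 y x = 0" using KB[OF qy qx] h by blast
    then show False using b unfolding e by blast
  qed
qed

lemma pert:
  assumes "qf B z > 0" "e \<bullet> x0 \<noteq> 0"
  shows "\<exists>t. qf B (z + t *\<^sub>R x0) > 0 \<and> e \<bullet> (z + t *\<^sub>R x0) \<noteq> 0"
proof (cases "e \<bullet> z = 0")
  case False then show ?thesis using assms(1) by (intro exI[of _ 0]) simp
next
  case True
  obtain d where d: "d > 0" "\<forall>t. \<bar>t\<bar> < d \<longrightarrow> qf B (z + t *\<^sub>R x0) > 0"
    using perturb_pos[OF assms(1)] by blast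
  have "qf B (z + (d/2) *\<^sub>R x0) > 0" using d by simp
  moreover have "e \<bullet> (z + (d/2) *\<^sub>R x0) \<noteq> 0" using True assms(2) d(1) by (simp add: inner_add_right)
  ultimately show ?thesis by blast
qed

lemma pert_neg:
  assumes "qf B z < 0" "e \<bullet> x0 \<noteq> 0"
  shows "\<exists>t. qf B (z + t *\<^sub>R x0) < 0 \<and> e \<bullet> (z + t *\<^sub>R x0) \<noteq> 0"
proof -
  have "qf (- B) z > 0" using assms(1) unfolding qf_neg by linarith
  from pert[OF this assms(2)] obtain t where t: "qf (- B) (z + t *\<^sub>R x0) > 0" "e \<bullet> (z + t *\<^sub>R x0) \<noteq> 0"
    by blast
  have "qf B (z + t *\<^sub>R x0) < 0" using t(1) unfolding qf_neg by linarith
  then show ?thesis using t(2) by blast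
qed

lemma half:
  assumes S1: "sym_mat M1" and q: "\<And>w. qf M1 w = (a \<bullet> w) * (m \<bullet> w)"
    and KB: "\<And>x y. qf M1 x = 0 \<Longrightarrow> qf M1 y = 0 \<Longrightarrow> qf B x > 0 \<Longrightarrow> qf B y < 0 \<Longrightarrow> bf M1 x y = 0"
    and D: "(a \<bullet> a) * (m \<bullet> m) - (a \<bullet> m)^2 \<noteq> 0"
    and x1: "a \<bullet> x1 = 0" "qf B x1 > 0" and y1: "m \<bullet> y1 = 0" "qf B y1 \<noteq> 0"
  shows "\<forall>z. qf M1 z = 0 \<longrightarrow> qf B z \<ge> 0"
proof -
  define x0 where "x0 = (a \<bullet> a) *\<^sub>R m - (a \<bullet> m) *\<^sub>R a"
  define y0 where "y0 = (m \<bullet> m) *\<^sub>R a - (a \<bullet> m) *\<^sub>R m"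
  have ax0: "a \<bullet> x0 = 0" unfolding x0_def by (simp add: inner_diff_right inner_commute)
  have mx0: "m \<bullet> x0 \<noteq> 0" unfolding x0_def using D
    by (simp add: inner_diff_right inner_commute power2_eq_square algebra_simps)
  have my0: "m \<bullet> y0 = 0" unfolding y0_def by (simp add: inner_diff_right inner_commute)
  have ay0: "a \<bullet> y0 \<noteq> 0" unfolding y0_def using D
    by (simp add: inner_diff_right inner_commute power2_eq_square algebra_simps)
  obtain t where t: "qf B (x1 + t *\<^sub>R x0) > 0" "m \<bullet> (x1 + t *\<^sub>R x0) \<noteq> 0"
    using pert[OF x1(2) mx0] by blast
  define x1' where "x1' = x1 + t *\<^sub>R x0"
  have x1': "a \<bullet> x1' = 0" "m \<bullet> x1' \<noteq> 0" "qf B x1' > 0"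
    using x1(1) ax0 t unfolding x1'_def by (auto simp: inner_add_right)
  have Ypos: "qf B y \<ge> 0" if my: "m \<bullet> y = 0" for y
  proof (rule ccontr)
    assume "\<not> qf B y \<ge> 0"
    then have "qf B y < 0" by simp
    then obtain s where s: "qf B (y + s *\<^sub>R y0) < 0" "a \<bullet> (y + s *\<^sub>R y0) \<noteq> 0"
      using pert_neg[OF _ ay0] by blast
    have "m \<bullet> (y + s *\<^sub>R y0) = 0" using my my0 by (simp add: inner_add_right)
    then show False using cross(1)[OF S1 q KB x1'(1) x1'(2) _ s(2)] x1'(3) s(1) by blast
  qed
  have y1p: "qf B y1 > 0" using Ypos[OF y1(1)] y1(2) by simp
  obtain t' where t': "qf B (y1 + t' *\<^sub>R y0) > 0" "a \<bullet> (y1 + t' *\<^sub>R y0) \<noteq> 0"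
    using pert[OF y1p ay0] by blast
  define y1' where "y1' = y1 + t' *\<^sub>R y0"
  have y1': "m \<bullet> y1' = 0" "a \<bullet> y1' \<noteq> 0" "qf B y1' > 0"
    using y1(1) my0 t' unfolding y1'_def by (auto simp: inner_add_right)
  have Xpos: "qf B x \<ge> 0" if ax: "a \<bullet> x = 0" for x
  proof (rule ccontr)
    assume "\<not> qf B x \<ge> 0"
    then have "qf B x < 0" by simp
    then obtain s where s: "qf B (x + s *\<^sub>R x0) < 0" "m \<bullet> (x + s *\<^sub>R x0) \<noteq> 0"
      using pert_neg[OF _ mx0] by blast
    have "a \<bullet> (x + s *\<^sub>R x0) = 0" using ax ax0 by (simp add: inner_add_right)
    then show False using cross(2)[OF S1 q KB _ s(2) y1'(1) y1'(2)] y1'(3) s(1) by blast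
  qed
  show ?thesis
  proof (intro allI impI)
    fix z assume "qf M1 z = 0"
    then have "a \<bullet> z = 0 \<or> m \<bullet> z = 0" using q[of z] by simp
    then show "qf B z \<ge> 0" using Xpos Ypos by blast
  qed
qed

lemma step2:
  assumes S1: "sym_mat M1" and SB: "sym_mat B" and q: "\<And>w. qf M1 w = (a \<bullet> w) * (m \<bullet> w)"
    and KB: "\<And>x y. qf M1 x = 0 \<Longrightarrow> qf M1 y = 0 \<Longrightarrow> qf B x > 0 \<Longrightarrow> qf B y < 0 \<Longrightarrow> bf M1 x y = 0"
    and D: "(a \<bullet> a) * (m \<bullet> m) - (a \<bullet> m)^2 \<noteq> 0"
    and NP: "\<not> (\<forall>z. qf M1 z = 0 \<longrightarrow> qf B z \<ge> 0)"
    and NN: "\<not> (\<forall>z. qf M1 z = 0 \<longrightarrow> qf B z \<le> 0)"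
  shows "(\<forall>x. a \<bullet> x = 0 \<longrightarrow> qf B x = 0) \<or> (\<forall>y. m \<bullet> y = 0 \<longrightarrow> qf B y = 0)"
proof (rule ccontr)
  assume "\<not> ?thesis"
  then obtain x1 y1 where x1: "a \<bullet> x1 = 0" "qf B x1 \<noteq> 0" and y1: "m \<bullet> y1 = 0" "qf B y1 \<noteq> 0"
    by blast
  show False
  proof (cases "qf B x1 > 0")
    case True
    then show False using half[OF S1 q KB D x1(1) True y1] NP by blast
  next
    case False
    then have xn: "qf (- B) x1 > 0" using x1(2) unfolding qf_neg by linarith
    have KB': "bf M1 x y = 0" if "qf M1 x = 0" "qf M1 y = 0" "qf (- B) x > 0" "qf (- B) y < 0" for x y
    proof -
      have a1: "qf B y > 0" using that(4) unfolding qf_neg by linarith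
      have a2: "qf B x < 0" using that(3) unfolding qf_neg by linarith
      have "bf M1 y x = 0" by (rule KB[OF that(2) that(1) a1 a2])
      moreover have "bf M1 x y = bf M1 y x" by (rule bf_sym[OF S1])
      ultimately show ?thesis by simp
    qed
    have y1n: "qf (- B) y1 \<noteq> 0" using y1(2) unfolding qf_neg by linarith
    have "\<forall>z. qf M1 z = 0 \<longrightarrow> qf (- B) z \<ge> 0"
      by (rule half[OF S1 q KB' D x1(1) xn y1(1) y1n])
    then have "\<forall>z. qf M1 z = 0 \<longrightarrow> qf B z \<le> 0" unfolding qf_neg by auto
    then show False using NN by blast
  qed
qed



theorem theorem4p2:
  fixes M1 M2 :: "real^'n^'n"
  assumes "sym_mat M1" and "sym_mat M2"
    and "rank_one_generated (T2 M1 M2)"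
  shows "(\<exists>\<alpha>1 \<alpha>2. (\<alpha>1, \<alpha>2) \<noteq> (0, 0) \<and> psd (\<alpha>1 *\<^sub>R M1 + \<alpha>2 *\<^sub>R M2))
       \<or> (\<exists>a b c :: real^'n. M1 = Sym (outer a c) \<and> M2 = Sym (outer b c))"
proof (rule ccontr)
  assume nt: "\<not> ?thesis"
  then have ni: "\<not> (\<exists>\<alpha>1 \<alpha>2. (\<alpha>1, \<alpha>2) \<noteq> (0, 0) \<and> psd (\<alpha>1 *\<^sub>R M1 + \<alpha>2 *\<^sub>R M2))" by blast
  note S1 = assms(1) and S2 = assms(2) and R = assms(3)
  have N: "\<exists>x. \<alpha>1 * qf M1 x + \<alpha>2 * qf M2 x < 0" if "(\<alpha>1, \<alpha>2) \<noteq> (0, 0)" for \<alpha>1 \<alpha>2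
  proof -
    have "\<not> psd (\<alpha>1 *\<^sub>R M1 + \<alpha>2 *\<^sub>R M2)" using ni that by blast
    moreover have "sym_mat (\<alpha>1 *\<^sub>R M1 + \<alpha>2 *\<^sub>R M2)" by (rule sym_comb[OF S1 S2])
    ultimately obtain x where "\<not> 0 \<le> x \<bullet> ((\<alpha>1 *\<^sub>R M1 + \<alpha>2 *\<^sub>R M2) *v x)"
      unfolding psd_def by blast
    then have "qf (\<alpha>1 *\<^sub>R M1 + \<alpha>2 *\<^sub>R M2) x < 0" unfolding qf_def by simp
    then show ?thesis unfolding qf_comb by blast
  qed
  obtain uneg where uneg: "qf M1 uneg < 0" using N[of 1 0] by auto
  obtain upos where upos: "qf M1 upos > 0" using N[of "-1" 0] by auto
  have NP: "\<not> (\<forall>z. qf M1 z = 0 \<longrightarrow> qf M2 z \<ge> 0)"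
  proof
    assume h: "\<forall>z. qf M1 z = 0 \<longrightarrow> qf M2 z \<ge> 0"
    obtain l where l: "\<forall>x. qf M2 x + l * qf M1 x \<ge> 0"
      using slemma[OF S1 S2 _ upos uneg] h by blast
    obtain x where "l * qf M1 x + 1 * qf M2 x < 0" using N[of l 1] by auto
    then show False using l[rule_format, of x] by linarith
  qed
  have NN: "\<not> (\<forall>z. qf M1 z = 0 \<longrightarrow> qf M2 z \<le> 0)"
  proof
    assume h: "\<forall>z. qf M1 z = 0 \<longrightarrow> qf M2 z \<le> 0"
    have h': "qf (- M2) z \<ge> 0" if "qf M1 z = 0" for z using h that unfolding qf_neg by auto
    obtain l where l: "\<forall>x. qf (- M2) x + l * qf M1 x \<ge> 0"
      using slemma[OF S1 sym_neg[OF S2] h' upos uneg] by blast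
    obtain x where "l * qf M1 x + (-1) * qf M2 x < 0" using N[of l "-1"] by auto
    then show False using l[rule_format, of x] unfolding qf_neg by linarith
  qed
  have KB: "bf M1 x y = 0" if "qf M1 x = 0" "qf M1 y = 0" "qf M2 x > 0" "qf M2 y < 0" for x y
    by (rule K[OF S1 S2 R that])
  obtain w where w: "qf M1 w = 0" "M1 *v w \<noteq> 0" using exists_w[OF S1 upos uneg] by blast
  obtain x0 where x0: "qf M1 x0 = 0" "qf M2 x0 > 0" using NN by (auto simp: not_le)
  obtain y0 where y0: "qf M1 y0 = 0" "qf M2 y0 < 0" using NP by (auto simp: not_le)
  obtain x where x: "qf M1 x = 0" "qf M2 x > 0" "M1 *v x \<noteq> 0"
    using step0[OF S1 S2 x0 w] by blast
  have y0': "qf (- M2) y0 > 0" using y0(2) unfolding qf_neg by linarith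
  obtain y where y: "qf M1 y = 0" "qf (- M2) y > 0" "M1 *v y \<noteq> 0"
    using step0[OF S1 sym_neg[OF S2] y0(1) y0' w] by blast
  have y2: "qf M2 y < 0" using y(2) unfolding qf_neg by linarith
  define a where "a = M1 *v x"
  have H1: "\<forall>w. w \<bullet> a = 0 \<longrightarrow> qf M1 w = 0"
    using step1[OF S1 S2 KB x(1,2,3) y(1) y2 y(3)] unfolding a_def .
  have a0: "a \<noteq> 0" using x(3) a_def by simp
  have H1': "qf M1 w = 0" if "a \<bullet> w = 0" for w using H1 that by (simp add: inner_commute)
  obtain m where q: "\<forall>w. qf M1 w = (a \<bullet> w) * (m \<bullet> w)" using FL[OF S1 a0 H1'] by blast
  have D: "(a \<bullet> a) * (m \<bullet> m) - (a \<bullet> m)^2 \<noteq> 0"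
  proof
    assume D0: "(a \<bullet> a) * (m \<bullet> m) - (a \<bullet> m)^2 = 0"
    define k where "k = (a \<bullet> m) / (a \<bullet> a)"
    have aa: "a \<bullet> a > 0" using a0 by simp
    have "(m - k *\<^sub>R a) \<bullet> (m - k *\<^sub>R a) = ((a \<bullet> a) * (m \<bullet> m) - (a \<bullet> m)^2) / (a \<bullet> a)"
      using aa unfolding k_def
      by (simp add: inner_diff_left inner_diff_right inner_commute field_simps power2_eq_square)
    then have "m = k *\<^sub>R a" using D0 by simp
    then have qk: "qf M1 w = k * (a \<bullet> w)^2" for w using q by (simp add: power2_eq_square)
    have "k * (a \<bullet> uneg)^2 < 0" using uneg qk by simp
    then have "k < 0" by (simp add: mult_less_0_iff)
    moreover have "k * (a \<bullet> upos)^2 > 0" using upos qk by simp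
    then have "k > 0" by (simp add: zero_less_mult_iff)
    ultimately show False by simp
  qed
  have q': "qf M1 w = (a \<bullet> w) * (m \<bullet> w)" for w using q by blast
  have st2: "(\<forall>x. a \<bullet> x = 0 \<longrightarrow> qf M2 x = 0) \<or> (\<forall>y. m \<bullet> y = 0 \<longrightarrow> qf M2 y = 0)"
    by (rule step2[OF S1 S2 q' KB D NP NN])
  obtain c where c: "c \<noteq> 0" "\<And>x. c \<bullet> x = 0 \<Longrightarrow> qf M1 x = 0" "\<And>x. c \<bullet> x = 0 \<Longrightarrow> qf M2 x = 0"
  proof (cases "\<forall>x. a \<bullet> x = 0 \<longrightarrow> qf M2 x = 0")
    case True
    show ?thesis by (rule that[of a]) (use a0 H1' True in auto)
  next
    case False
    then have m2: "\<forall>y. m \<bullet> y = 0 \<longrightarrow> qf M2 y = 0" using st2 by blast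
    have m0: "m \<noteq> 0" using D by auto
    show ?thesis by (rule that[of m]) (use m0 q' m2 in auto)
  qed
  obtain a' where a': "\<forall>w. qf M1 w = (c \<bullet> w) * (a' \<bullet> w)" using FL[OF S1 c(1) c(2)] by blast
  obtain b' where b': "\<forall>w. qf M2 w = (c \<bullet> w) * (b' \<bullet> w)" using FL[OF S2 c(1) c(3)] by blast
  have "M1 = Sym (outer a' c)"
    by (rule qf_eq_imp_eq[OF S1 sym_Sym]) (simp add: Sym_outer_qf a' mult.commute)
  moreover have "M2 = Sym (outer b' c)"
    by (rule qf_eq_imp_eq[OF S2 sym_Sym]) (simp add: Sym_outer_qf b' mult.commute)
  ultimately have "\<exists>a b c :: real^'n. M1 = Sym (outer a c) \<and> M2 = Sym (outer b c)" by blast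
  then show False using nt by blast
qed


end
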